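(* Let $(X,\tau)$ be a topological space, let $X_n\subseteq X$ ($n\in\mathbb{N}\cup\{0\}$) be subspaces, and let $f_n:X_n\to X_{n+1}$ be continuous maps, forming the nonautonomous discrete system $\{f_n\}_{n=0}^\infty$. Assume that $X_0$ is a second countable subspace of $X$ and that $X$ is first countable at every point of $X_0$. Suppose that the system $\{f_n\}_{n=0}^\infty$ is topologically transitive on $X_0$ and that $\overline{O}\neq X_0$, where $$O=\{x\in X_0 : \overline{\operatorname{orb}(x)}^{X}\cap X_0 = X_0\}.$$ Then $X_0$ is not a Baire space.
   Context: For $x_0\in X_0$, the orbit of $x_0$ under the system is $\operatorname{orb}(x_0)=\{x_0,\ f_0(x_0),\ f_1\circ f_0(x_0),\ \dots,\ f_n\circ f_{n-1}\circ\cdots\circ f_0(x_0),\ \dots\}$, and $\overline{\operatorname{orb}(x)}^{X}$ denotes its closure in $X$. The closure $\overline{O}$ is taken in $X_0$. The system $\{f_n\}_{n=0}^\infty$ is called topologically transitive on $X_0$ if for any two nonempty open sets $U_0,V_0$ of $X_0$ there exists $n\in\mathbb{N}$ such that $(f_{n-1}\circ f_{n-2}\circ\cdots\circ f_0)(U_0)\cap V_0\neq\emptyset$. A space is Baire if the intersection of any sequence of dense open subsets is dense. *)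

theory Defs
  imports "HOL-Analysis.Analysis"
begin

fun traj :: "(nat \<Rightarrow> 'a \<Rightarrow> 'a) \<Rightarrow> nat \<Rightarrow> 'a \<Rightarrow> 'a" where
  "traj f 0 x = x"
| "traj f (Suc n) x = f n (traj f n x)"

definition orb :: "(nat \<Rightarrow> 'a \<Rightarrow> 'a) \<Rightarrow> 'a \<Rightarrow> 'a set" where
  "orb f x = range (\<lambda>n. traj f n x)"

definition first_countable_at :: "'a topology \<Rightarrow> 'a \<Rightarrow> bool" where
  "first_countable_at X x \<longleftrightarrow>
     (\<exists>\<B>. countable \<B> \<and> (\<forall>V \<in> \<B>. openin X V \<and> x \<in> V) \<and>
          (\<forall>U. openin X U \<and> x \<in> U \<longrightarrow> (\<exists>V \<in> \<B>. V \<subseteq> U)))"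

definition top_transitive :: "'a topology \<Rightarrow> (nat \<Rightarrow> 'a set) \<Rightarrow> (nat \<Rightarrow> 'a \<Rightarrow> 'a) \<Rightarrow> bool" where
  "top_transitive X Xs f \<longleftrightarrow>
     (\<forall>U V. openin (subtopology X (Xs 0)) U \<and> U \<noteq> {} \<and>
            openin (subtopology X (Xs 0)) V \<and> V \<noteq> {} \<longrightarrow>
            (\<exists>n\<ge>1. traj f n ` U \<inter> V \<noteq> {}))"

definition Baire_space :: "'a topology \<Rightarrow> bool" where
  "Baire_space X \<longleftrightarrow>
     (\<forall>U :: nat \<Rightarrow> 'a set. (\<forall>n. openin X (U n) \<and> X closure_of (U n) = topspace X) \<longrightarrow>
        X closure_of (topspace X \<inter> (\<Inter>n. U n)) = topspace X)"

end

theory Submission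
  imports Defs
begin

lemma traj_cont:
  assumes subs: "\<And>n. Xs n \<subseteq> topspace X"
    and cont: "\<And>n. continuous_map (subtopology X (Xs n)) (subtopology X (Xs (Suc n))) (f n)"
  shows "continuous_map (subtopology X (Xs 0)) (subtopology X (Xs n)) (traj f n)"
proof (induction n)
  case 0
  then show ?case by (simp add: continuous_map_id[unfolded id_def])
next
  case (Suc n)
  have "continuous_map (subtopology X (Xs 0)) (subtopology X (Xs (Suc n))) (f n \<circ> traj f n)"
    using continuous_map_compose[OF Suc cont] .
  then show ?case by (simp add: o_def)
qed

theorem theorem1p1:
  fixes X :: "'a topology" and Xs :: "nat \<Rightarrow> 'a set" and f :: "nat \<Rightarrow> 'a \<Rightarrow> 'a"
  assumes subs: "\<And>n. Xs n \<subseteq> topspace X"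
    and cont: "\<And>n. continuous_map (subtopology X (Xs n)) (subtopology X (Xs (Suc n))) (f n)"
    and sc: "second_countable (subtopology X (Xs 0))"
    and fc: "\<And>x. x \<in> Xs 0 \<Longrightarrow> first_countable_at X x"
    and trans: "top_transitive X Xs f"
    and notdense: "subtopology X (Xs 0) closure_of
                     {x \<in> Xs 0. (X closure_of orb f x) \<inter> Xs 0 = Xs 0} \<noteq> Xs 0"
  shows "\<not> Baire_space (subtopology X (Xs 0))"
proof
  assume baire: "Baire_space (subtopology X (Xs 0))"
  define X0 where "X0 = Xs 0"
  define T where "T = subtopology X X0"
  have topT: "topspace T = X0" using subs[of 0] unfolding T_def X0_def by auto
  have tc: "\<And>n. continuous_map T (subtopology X (Xs n)) (traj f n)"
    unfolding T_def X0_def using traj_cont[of Xs X f, OF subs cont] .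
  have trajin: "\<And>n x. x \<in> X0 \<Longrightarrow> traj f n x \<in> Xs n"
  proof -
    fix n x assume "x \<in> X0"
    then show "traj f n x \<in> Xs n"
      using continuous_map_image_subset_topspace[OF tc[of n]] topT by auto
  qed
  obtain D where D: "countable D" "D \<subseteq> X0" "T closure_of D = X0"
    using second_countable_imp_separable_space[OF sc] topT
    unfolding separable_space_def T_def X0_def by auto
  define NB where "NB z = (SOME \<B>. countable \<B> \<and> (\<forall>V \<in> \<B>. openin X V \<and> z \<in> V) \<and>
          (\<forall>U. openin X U \<and> z \<in> U \<longrightarrow> (\<exists>V \<in> \<B>. V \<subseteq> U)))" for z
  have NB: "countable (NB z) \<and> (\<forall>V \<in> NB z. openin X V \<and> z \<in> V) \<and>
          (\<forall>U. openin X U \<and> z \<in> U \<longrightarrow> (\<exists>V \<in> NB z. V \<subseteq> U))" if "z \<in> D" for z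
  proof -
    have "first_countable_at X z" using fc that D(2) X0_def by auto
    then show ?thesis unfolding NB_def first_countable_at_def by (rule someI_ex)
  qed
  define \<V> where "\<V> = (\<Union>z\<in>D. NB z)"
  have cV: "countable \<V>" unfolding \<V>_def using D(1) NB by auto
  have X0ne: "X0 \<noteq> {}"
  proof
    assume "X0 = {}"
    then show False using notdense closure_of_subset_topspace[of T] topT
      unfolding T_def X0_def by auto
  qed
  have Dne: "D \<noteq> {}" using D(3) X0ne by auto
  then obtain z0 where z0: "z0 \<in> D" by auto
  have "z0 \<in> topspace X" using z0 D(2) subs[of 0] X0_def by auto
  then obtain V0 where "V0 \<in> NB z0" using NB[OF z0] by (meson openin_topspace)
  then have Vne: "\<V> \<noteq> {}" using z0 unfolding \<V>_def by auto
  define G where "G V = {x \<in> X0. \<exists>n. traj f n x \<in> V}" for V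
  have Gopen: "openin T (G V)" if "openin X V" for V
  proof -
    have "G V = (\<Union>n. {x \<in> topspace T. traj f n x \<in> V \<inter> Xs n})"
      unfolding G_def using topT trajin by auto
    moreover have "openin T {x \<in> topspace T. traj f n x \<in> V \<inter> Xs n}" for n
      by (rule openin_continuous_map_preimage[OF tc])
        (use that in \<open>auto simp: openin_subtopology\<close>)
    ultimately show ?thesis
      apply (simp only:)
      apply (rule openin_Union)
      by blast
  qed
  have Gdense: "T closure_of (G V) = topspace T" if VV: "V \<in> \<V>" for V
  proof -
    obtain z where z: "z \<in> D" "V \<in> NB z" using VV unfolding \<V>_def by auto
    have Vo: "openin X V" "z \<in> V" using NB[OF z(1)] z(2) by auto
    have zX0: "z \<in> X0" using z D(2) by auto
    show ?thesis unfolding dense_intersects_open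
    proof (intro allI impI)
      fix U assume U: "openin T U \<and> U \<noteq> {}"
      have "openin (subtopology X (Xs 0)) (V \<inter> Xs 0)"
        using Vo by (auto simp: openin_subtopology)
      moreover have "V \<inter> Xs 0 \<noteq> {}" using Vo zX0 X0_def by auto
      ultimately obtain n where "traj f n ` U \<inter> (V \<inter> Xs 0) \<noteq> {}"
        using trans U unfolding top_transitive_def T_def X0_def by blast
      then obtain y where "y \<in> U" "traj f n y \<in> V" by auto
      moreover have "y \<in> X0" using \<open>y \<in> U\<close> U openin_subset topT by blast
      ultimately show "G V \<inter> U \<noteq> {}" unfolding G_def by auto
    qed
  qed
  define UU where "UU k = G (from_nat_into \<V> k)" for k
  have "\<forall>k. openin T (UU k) \<and> T closure_of (UU k) = topspace T"
  proof
    fix k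
    have "from_nat_into \<V> k \<in> \<V>" using from_nat_into[OF Vne] .
    moreover then have "openin X (from_nat_into \<V> k)" unfolding \<V>_def using NB by auto
    ultimately show "openin T (UU k) \<and> T closure_of (UU k) = topspace T"
      unfolding UU_def using Gopen Gdense by auto
  qed
  then have dense: "T closure_of (topspace T \<inter> (\<Inter>k. UU k)) = topspace T"
    using baire unfolding Baire_space_def T_def X0_def by auto
  let ?O = "{x \<in> Xs 0. (X closure_of orb f x) \<inter> Xs 0 = Xs 0}"
  have sub: "topspace T \<inter> (\<Inter>k. UU k) \<subseteq> ?O"
  proof
    fix x assume x: "x \<in> topspace T \<inter> (\<Inter>k. UU k)"
    have xG: "x \<in> G V" if VV: "V \<in> \<V>" for V
    proof -
      obtain k where "from_nat_into \<V> k = V" using from_nat_into_surj[OF cV VV] by auto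
      then show ?thesis using x UU_def by auto
    qed
    have Dsub: "D \<subseteq> X closure_of orb f x"
    proof
      fix z assume z: "z \<in> D"
      have "z \<in> topspace X" using z D(2) subs[of 0] X0_def by auto
      moreover have "\<exists>y. y \<in> orb f x \<and> y \<in> U" if UU1: "z \<in> U" "openin X U" for U
      proof -
        obtain V where V: "V \<in> NB z" "V \<subseteq> U" using NB[OF z] UU1 by auto
        then have "V \<in> \<V>" using z \<V>_def by auto
        then obtain n where "traj f n x \<in> V" using xG G_def by blast
        then show ?thesis using V unfolding orb_def by auto
      qed
      ultimately show "z \<in> X closure_of orb f x" unfolding in_closure_of by auto
    qed
    have "X closure_of D \<subseteq> X closure_of orb f x"
      by (rule closure_of_minimal[OF Dsub closedin_closure_of])
    moreover have "X0 \<subseteq> X closure_of D"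
      using D(3) closure_of_subtopology_subset[of X X0 D] unfolding T_def by auto
    ultimately show "x \<in> ?O" using x topT X0_def by auto
  qed
  have "T closure_of ?O = X0"
    using closure_of_mono[OF sub, of T] dense topT closure_of_subset_topspace[of T ?O] by auto
  then show False using notdense unfolding T_def X0_def by simp
qed

end
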